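(* Let $V$ be a set and $o$ a partial 3-order on $V$ with the $(4,3)$ property. Then there are no distinct $A,B,C,D\in V$ with $o(ABD)=o(BCD)=o(CAD)=1$.
   Context: A partial orientation on $V$ is a map $o$ from ordered triples of distinct elements of $V$ to $\{+1,0,-1\}$ with $o(uvw)=o(wuv)=o(vwu)=-o(uwv)=-o(vuw)=-o(wvu)$. It is a partial 3-order if it satisfies the interiority condition: for all distinct $a,b,c,d$, $o(abd)=o(bcd)=o(cad)=1$ implies $o(abc)=1$. It has the $(4,3)$ property if among any four distinct elements of $V$ there are three, $x,y,z$, with $o(xyz)=0$. *)

theory Defs
  imports Main
begin

text \<open>We represent it
as a total function 'a => 'a => 'a => int; only its values on triples of
distinct elements of V are constrained/used.\<close>

definition partial_orientation :: "'a set \<Rightarrow> ('a \<Rightarrow> 'a \<Rightarrow> 'a \<Rightarrow> int) \<Rightarrow> bool" where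
  "partial_orientation V ori \<longleftrightarrow>
    (\<forall>u\<in>V. \<forall>v\<in>V. \<forall>w\<in>V. distinct [u, v, w] \<longrightarrow>
       ori u v w \<in> {1, 0, -1} \<and>
       ori u v w = ori w u v \<and> ori u v w = ori v w u \<and>
       ori u v w = - ori u w v \<and> ori u v w = - ori v u w \<and> ori u v w = - ori w v u)"

definition partial_3order :: "'a set \<Rightarrow> ('a \<Rightarrow> 'a \<Rightarrow> 'a \<Rightarrow> int) \<Rightarrow> bool" where
  "partial_3order V ori \<longleftrightarrow> partial_orientation V ori \<and>
    (\<forall>a\<in>V. \<forall>b\<in>V. \<forall>c\<in>V. \<forall>d\<in>V. distinct [a, b, c, d] \<longrightarrow>
       ori a b d = 1 \<longrightarrow> ori b c d = 1 \<longrightarrow> ori c a d = 1 \<longrightarrow> ori a b c = 1)"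

definition prop_4_3 :: "'a set \<Rightarrow> ('a \<Rightarrow> 'a \<Rightarrow> 'a \<Rightarrow> int) \<Rightarrow> bool" where
  "prop_4_3 V ori \<longleftrightarrow>
    (\<forall>S\<subseteq>V. card S = 4 \<longrightarrow>
       (\<exists>x\<in>S. \<exists>y\<in>S. \<exists>z\<in>S. distinct [x, y, z] \<and> ori x y z = 0))"

end

theory Submission
  imports Defs
begin

theorem lemma5:
  fixes V :: "'a set" and ori :: "'a \<Rightarrow> 'a \<Rightarrow> 'a \<Rightarrow> int"
  assumes "partial_3order V ori" and "prop_4_3 V ori"
  shows "\<not> (\<exists>A\<in>V. \<exists>B\<in>V. \<exists>C\<in>V. \<exists>D\<in>V. distinct [A, B, C, D] \<and>
              ori A B D = 1 \<and> ori B C D = 1 \<and> ori C A D = 1)"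
proof
  assume "\<exists>A\<in>V. \<exists>B\<in>V. \<exists>C\<in>V. \<exists>D\<in>V. distinct [A, B, C, D] \<and>
              ori A B D = 1 \<and> ori B C D = 1 \<and> ori C A D = 1"
  then obtain A B C D where V: "A \<in> V" "B \<in> V" "C \<in> V" "D \<in> V"
    and d: "distinct [A, B, C, D]" and h: "ori A B D = 1" "ori B C D = 1" "ori C A D = 1"
    by blast
  have po: "partial_orientation V ori" using assms(1) unfolding partial_3order_def by blast
  have int: "\<forall>a\<in>V. \<forall>b\<in>V. \<forall>c\<in>V. \<forall>d\<in>V. distinct [a, b, c, d] \<longrightarrow>
       ori a b d = 1 \<longrightarrow> ori b c d = 1 \<longrightarrow> ori c a d = 1 \<longrightarrow> ori a b c = 1"
    using assms(1) unfolding partial_3order_def by (rule conjunct2)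
  have abc: "ori A B C = 1" using int V d h by blast
  have perm: "\<And>u v w. u \<in> V \<Longrightarrow> v \<in> V \<Longrightarrow> w \<in> V \<Longrightarrow> distinct [u,v,w] \<Longrightarrow>
       ori u v w = ori w u v \<and> ori u v w = ori v w u \<and>
       ori u v w = - ori u w v \<and> ori u v w = - ori v u w \<and> ori u v w = - ori w v u"
  proof -
    fix u v w assume "u \<in> V" "v \<in> V" "w \<in> V" "distinct [u,v,w]"
    then show "ori u v w = ori w u v \<and> ori u v w = ori v w u \<and>
       ori u v w = - ori u w v \<and> ori u v w = - ori v u w \<and> ori u v w = - ori w v u"
      using po unfolding partial_orientation_def by blast
  qed
  have dd: "distinct [A,B,D]" "distinct [B,C,D]" "distinct [C,A,D]" "distinct [A,B,C]" using d by auto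
  note p1 = perm[OF V(1) V(2) V(4) dd(1)] and p2 = perm[OF V(2) V(3) V(4) dd(2)]
    and p3 = perm[OF V(3) V(1) V(4) dd(3)] and p4 = perm[OF V(1) V(2) V(3) dd(4)]
  have nz0: "ori A B D \<noteq> 0" "ori A D B \<noteq> 0" "ori B A D \<noteq> 0" "ori B D A \<noteq> 0" "ori D A B \<noteq> 0" "ori D B A \<noteq> 0"
    using h(1) p1 by (elim conjE; linarith)+
  have nz1: "ori B C D \<noteq> 0" "ori B D C \<noteq> 0" "ori C B D \<noteq> 0" "ori C D B \<noteq> 0" "ori D B C \<noteq> 0" "ori D C B \<noteq> 0"
    using h(2) p2 by (elim conjE; linarith)+
  have nz2: "ori C A D \<noteq> 0" "ori C D A \<noteq> 0" "ori A C D \<noteq> 0" "ori A D C \<noteq> 0" "ori D C A \<noteq> 0" "ori D A C \<noteq> 0"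
    using h(3) p3 by (elim conjE; linarith)+
  have nz3: "ori A B C \<noteq> 0" "ori A C B \<noteq> 0" "ori B A C \<noteq> 0" "ori B C A \<noteq> 0" "ori C A B \<noteq> 0" "ori C B A \<noteq> 0"
    using abc p4 by (elim conjE; linarith)+
  have c4: "card {A,B,C,D} = 4" using d by simp
  have sub: "{A,B,C,D} \<subseteq> V" using V by simp
  have P: "\<forall>S\<subseteq>V. card S = 4 \<longrightarrow>
       (\<exists>x\<in>S. \<exists>y\<in>S. \<exists>z\<in>S. distinct [x, y, z] \<and> ori x y z = 0)"
    using assms(2) unfolding prop_4_3_def .
  obtain x y z where xyz: "x \<in> {A,B,C,D}" "y \<in> {A,B,C,D}" "z \<in> {A,B,C,D}"
    "distinct [x,y,z]" "ori x y z = 0"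
    using P[rule_format, OF sub c4] by (elim bexE conjE) 
  show False using xyz d nz0 nz1 nz2 nz3 by (elim insertE emptyE; simp)
qed

end
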